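(* Let $n\ge 0$ and $\alpha\ge 1$ be integers, $N=2^{n+1}$, $c=2^{\alpha}+1$, and consider the 1D-Tree and the $c$-DAG over the uniform dataset $\mathcal{D}=\{0,\dots,N-1\}$ (as described in the context). For $s=1$, \[ \mathbb{E}_{\mathcal{I}_1}\left[\frac{FP_{\mathrm{Tree}}(Q)}{FP_{c\text{-DAG}}(Q)}\right]=1, \] and for every real $s$ with $1<s\le N$, \[ \mathbb{E}_{\mathcal{I}_s}\left[\frac{FP_{\mathrm{Tree}}(Q)}{FP_{c\text{-DAG}}(Q)}\right]\ \ge\ \max\left\{1,\ \frac12\left\lfloor\log_2\frac{N}{s}\right\rfloor\right\}. \]
   Context: The 1D-Tree over $\mathcal{D}=\{0,\dots,N-1\}\subset[0,N)$ has levels $\ell=0,\dots,n+1$; its level-$\ell$ nodes are the intervals $[m2^{n-\ell+1},(m+1)2^{n-\ell+1})$, $m=0,\dots,2^\ell-1$. The $c$-DAG over $\mathcal{D}$ has levels $\ell=0,\dots,n+1$; with $u_\ell=2^{n-\ell+1}/(c-1)$, its level-$\ell$ nodes are the intervals $[mu_\ell,\,mu_\ell+2^{n-\ell+1})$, $m=0,1,\dots,(c-1)2^\ell-(c-1)$ (a node $[a,a+L)$ has children $[a+jL/(2(c-1)),\,a+jL/(2(c-1))+L/2)$, $j=0,\dots,c-1$). For a query $Q$, SRC-search on a structure returns a node $v$ of the deepest level whose interval contains $Q$. The competitive false-positive ratio is $\frac{FP_{\mathrm{Tree}}(Q)}{FP_{c\text{-DAG}}(Q)}=\frac{|\mathcal{D}\cap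 \mathrm{range}_v|}{|\mathcal{D}\cap\mathrm{range}_w|}$, where $v$ is the node returned on the 1D-Tree and $w$ the node returned on the $c$-DAG (all nodes of a given level contain the same number of data points). For query length $s$, $\mathcal{I}_s$ is the distribution of $Q=[x,x+s)$ with $x$ uniform on $[0,N-s]$ (for $s=N$, $x=0$); for $s=1$ queries are single data points, i.e. $x$ uniform on the integers $\{0,\dots,N-1\}$. *)

theory Defs
  imports "HOL-Analysis.Analysis"
begin

definition dataset :: "nat \<Rightarrow> nat set" where
  "dataset n = {0..<2^(n+1)}"

definition tree_nodes :: "nat \<Rightarrow> nat set" where
  "tree_nodes l = {m. m < 2^l}"

definition tree_range :: "nat \<Rightarrow> nat \<Rightarrow> nat \<Rightarrow> real set" where
  "tree_range n l m = {real m * 2^(n+1-l) ..< (real m + 1) * 2^(n+1-l)}"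

definition dag_nodes :: "nat \<Rightarrow> nat \<Rightarrow> nat set" where
  "dag_nodes c l = {m. m \<le> (c-1) * 2^l - (c-1)}"

definition dag_range :: "nat \<Rightarrow> nat \<Rightarrow> nat \<Rightarrow> nat \<Rightarrow> real set" where
  "dag_range c n l m =
     {real m * (2^(n+1-l) / (real c - 1)) ..< real m * (2^(n+1-l) / (real c - 1)) + 2^(n+1-l)}"

definition query :: "real \<Rightarrow> real \<Rightarrow> real set" where
  "query x s = {x..<x+s}"

definition src_level :: "(nat \<Rightarrow> nat set) \<Rightarrow> (nat \<Rightarrow> nat \<Rightarrow> real set) \<Rightarrow> nat \<Rightarrow> real set \<Rightarrow> nat" where
  "src_level nodes rng n Q = Max {l. l \<le> n+1 \<and> (\<exists>m\<in>nodes l. Q \<subseteq> rng l m)}"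

definition src_node :: "(nat \<Rightarrow> nat set) \<Rightarrow> (nat \<Rightarrow> nat \<Rightarrow> real set) \<Rightarrow> nat \<Rightarrow> real set \<Rightarrow> nat \<times> nat" where
  "src_node nodes rng n Q =
     (let l = src_level nodes rng n Q in (l, SOME m. m \<in> nodes l \<and> Q \<subseteq> rng l m))"

text \<open>Number of data points in the range of a node (the false positives are counted this way).\<close>
definition data_in :: "nat \<Rightarrow> (nat \<Rightarrow> nat \<Rightarrow> real set) \<Rightarrow> nat \<times> nat \<Rightarrow> nat" where
  "data_in n rng v = card {d \<in> dataset n. real d \<in> rng (fst v) (snd v)}"

definition FP_tree :: "nat \<Rightarrow> real set \<Rightarrow> nat" where
  "FP_tree n Q = data_in n (tree_range n) (src_node tree_nodes (tree_range n) n Q)"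

definition FP_dag :: "nat \<Rightarrow> nat \<Rightarrow> real set \<Rightarrow> nat" where
  "FP_dag c n Q = data_in n (dag_range c n) (src_node (dag_nodes c) (dag_range c n) n Q)"

definition comp_ratio :: "nat \<Rightarrow> nat \<Rightarrow> real set \<Rightarrow> real" where
  "comp_ratio c n Q = real (FP_tree n Q) / real (FP_dag c n Q)"

text \<open>Expectation over I_s: for s = 1, x uniform on the integers {0..N-1};
  for s = N, x = 0; otherwise x uniform on [0, N-s].\<close>
definition exp_ratio :: "nat \<Rightarrow> nat \<Rightarrow> real \<Rightarrow> real" where
  "exp_ratio c n s =
    (let N = (2::real)^(n+1) in
     if s = 1 then (\<Sum>x\<in>dataset n. comp_ratio c n (query (real x) 1)) / N
     else if s = N then comp_ratio c n (query 0 s)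
     else (LINT x:{0..N-s}|lborel. comp_ratio c n (query x s)) / (N - s))"

end

theory Submission
  imports Defs
begin

lemma query_sub:
  fixes s x a b :: real
  assumes "s > 0"
  shows "query x s \<subseteq> {a..<b} \<longleftrightarrow> a \<le> x \<and> x + s \<le> b"
proof
  assume h: "query x s \<subseteq> {a..<b}"
  have "x \<in> query x s" using assms by (simp add: query_def)
  hence "a \<le> x" using h by auto
  moreover have "x + s \<le> b"
  proof (rule ccontr)
    assume "\<not> x + s \<le> b"
    hence "max x b \<in> query x s" using assms by (auto simp: query_def)
    thus False using h by auto
  qed
  ultimately show "a \<le> x \<and> x + s \<le> b" by simp
qed (auto simp: query_def)

lemma src_level_props:
  assumes "la \<le> n+1" "ma \<in> nodes la" "Q \<subseteq> rng la ma"
  shows "src_level nodes rng n Q \<le> n+1"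
    and "\<exists>m\<in>nodes (src_level nodes rng n Q). Q \<subseteq> rng (src_level nodes rng n Q) m"
    and "\<And>l m. l \<le> n+1 \<Longrightarrow> m \<in> nodes l \<Longrightarrow> Q \<subseteq> rng l m \<Longrightarrow> l \<le> src_level nodes rng n Q"
proof -
  let ?S = "{l. l \<le> n+1 \<and> (\<exists>m\<in>nodes l. Q \<subseteq> rng l m)}"
  have fin: "finite ?S" by (rule finite_subset[of _ "{..n+1}"]) auto
  have ne: "?S \<noteq> {}" using assms by auto
  have "Max ?S \<in> ?S" using Max_in[OF fin ne] .
  thus "src_level nodes rng n Q \<le> n+1"
    and "\<exists>m\<in>nodes (src_level nodes rng n Q). Q \<subseteq> rng (src_level nodes rng n Q) m"
    unfolding src_level_def by auto
  show "\<And>l m. l \<le> n+1 \<Longrightarrow> m \<in> nodes l \<Longrightarrow> Q \<subseteq> rng l m \<Longrightarrow> l \<le> src_level nodes rng n Q"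
    unfolding src_level_def using fin by (intro Max_ge) auto
qed

lemma data_in_src:
  assumes "la \<le> n+1" "ma \<in> nodes la" "Q \<subseteq> rng la ma"
    and "\<And>l m. l \<le> n+1 \<Longrightarrow> m \<in> nodes l \<Longrightarrow> data_in n rng (l, m) = f l"
  shows "data_in n rng (src_node nodes rng n Q) = f (src_level nodes rng n Q)"
proof -
  let ?l = "src_level nodes rng n Q"
  have "\<exists>m. m \<in> nodes ?l \<and> Q \<subseteq> rng ?l m" using src_level_props(2)[where nodes=nodes and rng=rng, OF assms(1-3)] by blast
  hence "(SOME m. m \<in> nodes ?l \<and> Q \<subseteq> rng ?l m) \<in> nodes ?l" by (rule someI2_ex) auto
  thus ?thesis unfolding src_node_def Let_def
    using assms(4) src_level_props(1)[where nodes=nodes and rng=rng, OF assms(1-3)] by simp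
qed

lemma count_ints:
  fixes a :: real and L N :: nat
  assumes "a \<ge> 0" "a + L \<le> N"
  shows "card {d \<in> {0..<N}. real d \<in> {a..<a + real L}} = L"
proof -
  define c where "c = nat \<lceil>a\<rceil>"
  have cc: "real c = of_int \<lceil>a\<rceil>" using assms unfolding c_def by simp
  have "{d \<in> {0..<N}. real d \<in> {a..<a + real L}} = {c..<c+L}"
  proof (intro set_eqI iffI)
    fix d assume "d \<in> {d \<in> {0..<N}. real d \<in> {a..<a + real L}}"
    hence h: "a \<le> real d" "real d < a + L" by auto
    have "\<lceil>a\<rceil> \<le> int d" using h(1) ceiling_le_iff[of a "int d"] by simp
    hence "c \<le> d" unfolding c_def by (metis nat_int nat_mono)
    moreover have "int d - int L < \<lceil>a\<rceil>"
      using h(2) by (simp add: less_ceiling_iff)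
    ultimately show "d \<in> {c..<c+L}" unfolding c_def by auto
  next
    fix d assume "d \<in> {c..<c+L}"
    hence h: "c \<le> d" "d < c + L" by auto
    have "\<lceil>a\<rceil> \<le> int d" using h(1) unfolding c_def by linarith
    hence "a \<le> real d" using ceiling_le_iff[of a "int d"] by simp
    moreover have "int d - int L < \<lceil>a\<rceil>" using h(2) unfolding c_def using assms by linarith
    hence "real d < a + L" by (simp add: less_ceiling_iff)
    moreover have "real d < N" using assms \<open>real d < a + L\<close> by linarith
    ultimately show "d \<in> {d \<in> {0..<N}. real d \<in> {a..<a + real L}}" by auto
  qed
  thus ?thesis by simp
qed

definition TL :: "nat \<Rightarrow> real \<Rightarrow> real \<Rightarrow> nat" where
  "TL n s x = src_level tree_nodes (tree_range n) n (query x s)"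
definition DL :: "nat \<Rightarrow> nat \<Rightarrow> real \<Rightarrow> real \<Rightarrow> nat" where
  "DL c n s x = src_level (dag_nodes c) (dag_range c n) n (query x s)"

lemma pow_split: "l \<le> n + 1 \<Longrightarrow> (2::real)^l * 2^(n+1-l) = 2^(n+1)"
  by (simp add: power_add[symmetric])

lemma tree_sub:
  assumes "s > 0"
  shows "query x s \<subseteq> tree_range n l m \<longleftrightarrow> real m * 2^(n+1-l) \<le> x \<and> x + s \<le> (real m+1) * 2^(n+1-l)"
  unfolding tree_range_def by (rule query_sub[OF assms])

lemma dag_sub:
  assumes "s > 0" "c = 2^\<alpha> + 1"
  shows "query x s \<subseteq> dag_range c n l m \<longleftrightarrow>
     real m * (2^(n+1-l) / 2^\<alpha>) \<le> x \<and> x + s \<le> real m * (2^(n+1-l) / 2^\<alpha>) + 2^(n+1-l)"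
proof -
  have "real c - 1 = 2^\<alpha>" using assms(2) by simp
  thus ?thesis unfolding dag_range_def using query_sub[OF assms(1)] by presburger
qed

lemma tree_base:
  assumes "s > 0" "0 \<le> x" "x + s \<le> 2^(n+1)"
  shows "0 \<in> tree_nodes 0" "query x s \<subseteq> tree_range n 0 0"
  using assms by (auto simp: tree_nodes_def tree_sub)

lemma dag_base:
  assumes "s > 0" "0 \<le> x" "x + s \<le> 2^(n+1)" "c = 2^\<alpha> + 1"
  shows "0 \<in> dag_nodes c 0" "query x s \<subseteq> dag_range c n 0 0"
  using assms unfolding dag_nodes_def dag_sub[OF assms(1,4)] by auto

lemma TL_props:
  assumes "s > 0" "0 \<le> x" "x + s \<le> 2^(n+1)"
  shows "TL n s x \<le> n+1"
    "\<exists>m<2^(TL n s x). real m * 2^(n+1-TL n s x) \<le> x \<and> x + s \<le> (real m+1) * 2^(n+1-TL n s x)"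
    "\<And>l m. l \<le> n+1 \<Longrightarrow> m < 2^l \<Longrightarrow> real m * 2^(n+1-l) \<le> x \<Longrightarrow> x + s \<le> (real m+1) * 2^(n+1-l) \<Longrightarrow> l \<le> TL n s x"
proof -
  have z: "0 \<le> n+1" by simp
  note b = src_level_props[where nodes=tree_nodes and rng="tree_range n" and Q="query x s", OF z tree_base[OF assms]]
  show "TL n s x \<le> n+1" using b(1) unfolding TL_def .
  show "\<exists>m<2^(TL n s x). real m * 2^(n+1-TL n s x) \<le> x \<and> x + s \<le> (real m+1) * 2^(n+1-TL n s x)"
    using b(2) unfolding TL_def tree_nodes_def tree_sub[OF assms(1)] by simp
  fix l m assume "l \<le> n+1" "m < 2^l" "real m * 2^(n+1-l) \<le> x" "x + s \<le> (real m+1) * 2^(n+1-l)"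
  thus "l \<le> TL n s x"
    using b(3)[of l m] unfolding TL_def tree_nodes_def tree_sub[OF assms(1)] by simp
qed

lemma DL_props:
  assumes "s > 0" "0 \<le> x" "x + s \<le> 2^(n+1)" "c = 2^\<alpha> + 1"
  shows "DL c n s x \<le> n+1"
    "\<And>l m. l \<le> n+1 \<Longrightarrow> m \<le> 2^\<alpha> * 2^l - 2^\<alpha> \<Longrightarrow> real m * (2^(n+1-l) / 2^\<alpha>) \<le> x \<Longrightarrow>
        x + s \<le> real m * (2^(n+1-l) / 2^\<alpha>) + 2^(n+1-l) \<Longrightarrow> l \<le> DL c n s x"
proof -
  have z: "0 \<le> n+1" by simp
  note b = src_level_props[where nodes="dag_nodes c" and rng="dag_range c n" and Q="query x s", OF z dag_base[OF assms]]
  show "DL c n s x \<le> n+1" using b(1) unfolding DL_def .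
  fix l m assume "l \<le> n+1" "m \<le> 2^\<alpha> * 2^l - 2^\<alpha>" "real m * (2^(n+1-l) / 2^\<alpha>) \<le> x"
        "x + s \<le> real m * (2^(n+1-l) / 2^\<alpha>) + 2^(n+1-l)"
  thus "l \<le> DL c n s x"
    using b(3)[of l m] unfolding DL_def dag_nodes_def dag_sub[OF assms(1,4)] using assms(4) by simp
qed

lemma tree_count:
  assumes "l \<le> n+1" "m < 2^l"
  shows "data_in n (tree_range n) (l, m) = 2^(n+1-l)"
proof -
  have "m + 1 \<le> 2^l" using assms(2) by simp
  hence "real (m + 1) \<le> real (2^l)" by (simp only: of_nat_le_iff)
  hence "real m + 1 \<le> 2^l" by simp
  hence "(real m + 1) * 2^(n+1-l) \<le> 2^l * 2^(n+1-l)" by (intro mult_right_mono) auto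
  hence le: "real m * 2^(n+1-l) + real (2^(n+1-l)::nat) \<le> real (2^(n+1)::nat)"
    using pow_split[OF assms(1)] by (simp add: algebra_simps)
  have eq: "(real m + 1) * 2^(n+1-l) = real m * 2^(n+1-l) + real (2^(n+1-l)::nat)"
    by (simp add: algebra_simps)
  show ?thesis unfolding data_in_def tree_range_def dataset_def fst_conv snd_conv eq
    by (rule count_ints[OF _ le]) simp
qed

lemma dag_count:
  assumes "l \<le> n+1" "m \<le> 2^\<alpha> * 2^l - 2^\<alpha>" "c = 2^\<alpha> + 1"
  shows "data_in n (dag_range c n) (l, m) = 2^(n+1-l)"
proof -
  have "(1::nat) \<le> 2^l" by simp
  hence "m \<le> 2^\<alpha> * (2^l - 1)" using assms(2) by (simp add: algebra_simps)
  hence "real m \<le> real (2^\<alpha> * (2^l - 1))" by (simp only: of_nat_le_iff)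
  hence "real m \<le> 2^\<alpha> * (2^l - 1)" using \<open>1 \<le> 2^l\<close> by (simp add: of_nat_diff)
  hence "real m / 2^\<alpha> \<le> 2^l - 1" by (simp add: field_simps)
  hence "real m / 2^\<alpha> * 2^(n+1-l) \<le> (2^l - 1) * 2^(n+1-l)" by (intro mult_right_mono) auto
  hence le: "real m * (2^(n+1-l) / 2^\<alpha>) + real (2^(n+1-l)::nat) \<le> real (2^(n+1)::nat)"
    using pow_split[OF assms(1)] by (simp add: algebra_simps)
  have rc: "real c - 1 = 2^\<alpha>" using assms(3) by simp
  show ?thesis unfolding data_in_def dag_range_def dataset_def fst_conv snd_conv rc
    using count_ints[OF _ le] by simp
qed

lemma ratio_eq:
  assumes "s > 0" "0 \<le> x" "x + s \<le> 2^(n+1)" "c = 2^\<alpha> + 1"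
  shows "comp_ratio c n (query x s) = 2^(n+1-TL n s x) / 2^(n+1-DL c n s x)"
proof -
  have t: "FP_tree n (query x s) = 2^(n+1-TL n s x)"
    unfolding FP_tree_def TL_def
    by (rule data_in_src[where f="\<lambda>l. 2^(n+1-l)" and nodes=tree_nodes and rng="tree_range n" and Q="query x s" and la=0 and ma=0 and n=n, OF _ tree_base[OF assms(1-3)]])
       (auto simp: tree_nodes_def tree_count)
  have dc: "\<And>l m. l \<le> n+1 \<Longrightarrow> m \<in> dag_nodes c l \<Longrightarrow> data_in n (dag_range c n) (l,m) = 2^(n+1-l)"
    using dag_count[OF _ _ assms(4)] assms(4) by (simp add: dag_nodes_def)
  have d: "FP_dag c n (query x s) = 2^(n+1-DL c n s x)"
    unfolding FP_dag_def DL_def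
    by (rule data_in_src[where f="\<lambda>l. 2^(n+1-l)" and nodes="dag_nodes c" and rng="dag_range c n" and Q="query x s" and la=0 and ma=0 and n=n, OF _ dag_base[OF assms]])
       (auto simp: dc)
  show ?thesis unfolding comp_ratio_def t d by simp
qed

lemma TL_le_DL:
  assumes "s > 0" "0 \<le> x" "x + s \<le> 2^(n+1)" "c = 2^\<alpha> + 1"
  shows "TL n s x \<le> DL c n s x"
proof -
  let ?T = "TL n s x"
  obtain m where m: "m < 2^?T" "real m * 2^(n+1-?T) \<le> x" "x + s \<le> (real m+1) * 2^(n+1-?T)"
    using TL_props(2)[OF assms(1-3)] by blast
  have "m * 2^\<alpha> \<le> 2^\<alpha> * 2^?T - 2^\<alpha>"
  proof -
    have "m \<le> 2^?T - 1" using m(1) by simp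
    hence "m * 2^\<alpha> \<le> (2^?T - 1) * 2^\<alpha>" by simp
    thus ?thesis by (simp add: algebra_simps)
  qed
  moreover have "real (m * 2^\<alpha>) * (2^(n+1-?T) / 2^\<alpha>) = real m * 2^(n+1-?T)" by simp
  ultimately show ?thesis
    using DL_props(2)[OF assms, of ?T "m * 2^\<alpha>"] m TL_props(1)[OF assms(1-3)]
    by (simp add: algebra_simps)
qed

lemma ratio_pow:
  assumes "s > 0" "0 \<le> x" "x + s \<le> 2^(n+1)" "c = 2^\<alpha> + 1"
  shows "comp_ratio c n (query x s) = 2^(DL c n s x - TL n s x)"
proof -
  have a: "TL n s x \<le> DL c n s x" "DL c n s x \<le> n+1"
    using TL_le_DL[OF assms] DL_props(1)[OF assms] by auto
  hence "n+1-TL n s x = (n+1-DL c n s x) + (DL c n s x - TL n s x)" by simp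
  thus ?thesis unfolding ratio_eq[OF assms] by (simp add: power_add)
qed

lemma ratio_ge1:
  assumes "s > 0" "0 \<le> x" "x + s \<le> 2^(n+1)" "c = 2^\<alpha> + 1"
  shows "comp_ratio c n (query x s) \<ge> 1"
  unfolding ratio_pow[OF assms] by simp

lemma ratio_unit:
  assumes "d < 2^(n+1)" "c = 2^\<alpha> + 1"
  shows "comp_ratio c n (query (real d) 1) = 1"
proof -
  have d: "real d + 1 \<le> 2^(n+1)"
  proof -
    have "d + 1 \<le> 2^(n+1)" using assms(1) by simp
    hence "real (d + 1) \<le> real (2^(n+1))" by (simp only: of_nat_le_iff)
    thus ?thesis by simp
  qed
  have "n+1 \<le> TL n 1 (real d)"
    using TL_props(3)[of 1 "real d" n "n+1" d] d assms(1) by simp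
  moreover have "TL n 1 (real d) \<le> DL c n 1 (real d)" "DL c n 1 (real d) \<le> n+1"
    using TL_le_DL[of 1 "real d" n c \<alpha>] DL_props(1)[of 1 "real d" n c \<alpha>] d assms by auto
  ultimately show ?thesis using ratio_pow[of 1 "real d" n c \<alpha>] d assms by simp
qed

lemma sum_ind_le1:
  assumes "finite F" "\<And>m m'. m \<in> F \<Longrightarrow> m' \<in> F \<Longrightarrow> x \<in> S m \<Longrightarrow> x \<in> S m' \<Longrightarrow> m = m'"
  shows "(\<Sum>m\<in>F. indicator (S m) x :: real) \<le> 1"
proof -
  have "(\<Sum>m\<in>F. indicator (S m) x :: real) = (\<Sum>m\<in>F. indicator {m. x \<in> S m} m)"
    by (simp add: indicator_def)
  also have "\<dots> = real (card (F \<inter> {m. x \<in> S m}))" proof -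
    have "real (card (F \<inter> {m. x \<in> S m})) = real (\<Sum>m\<in>F. indicator {m. x \<in> S m} m :: nat)"
      using sum_indicator_eq_card[OF assms(1), of "{m. x \<in> S m}"] by simp
    also have "\<dots> = (\<Sum>m\<in>F. indicator {m. x \<in> S m} m)"
      by (simp add: of_nat_sum indicator_def)
    finally show ?thesis by simp
  qed
  also have "card (F \<inter> {m. x \<in> S m}) \<le> Suc 0"
    using assms by (subst card_le_Suc0_iff_eq) auto
  finally show ?thesis by simp
qed

lemma sum_ind_pos:
  assumes "(\<Sum>m\<in>F. indicator (S m) x :: real) > 0"
  shows "\<exists>m\<in>F. x \<in> S m"
proof (rule ccontr)
  assume "\<not> ?thesis"
  hence "(\<Sum>m\<in>F. indicator (S m) x :: real) = 0" by (intro sum.neutral) auto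
  thus False using assms by simp
qed

lemma sum_ind_nonneg: "(\<Sum>m\<in>F. indicator (S m) x :: real) \<ge> 0"
  by (intro sum_nonneg) auto

locale cfg =
  fixes n \<alpha> c k :: nat and s h :: real
  assumes alpha: "\<alpha> \<ge> 1" and cdef: "c = 2^\<alpha> + 1" and k2: "2 \<le> k" and kn: "k \<le> n"
    and hdef: "h = 2^(n-k)" and s_gt: "h < s" and s_le: "s \<le> 2*h"
begin

lemma h_pos: "h > 0" using hdef by simp
lemma s_pos: "s > 0" using h_pos s_gt by simp

lemma Bk: "(2::real)^(n+1-k) = 2*h"
proof -
  have "n+1-k = Suc (n-k)" using kn by simp
  thus ?thesis using hdef by simp
qed

lemma NB: "(2::real)^(n+1) = 2^k * (2*h)"
  using pow_split[of k n] kn Bk by simp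

lemma Bj: "j \<le> k \<Longrightarrow> (2::real)^(n+1-j) = 2^(k-j) * (2*h)"
proof -
  assume "j \<le> k"
  hence "n+1-j = (k-j) + (n+1-k)" using kn by simp
  thus ?thesis using Bk by (simp add: power_add)
qed

lemma Mq: "j \<le> k \<Longrightarrow> real m * (2::real)^(n+1-j) = real (m * 2^(k-j)) * (2*h)"
  using Bj by simp

lemma q_bounds:
  fixes m j :: nat
  assumes "j \<le> k" "1 \<le> m" "m < 2^j"
  shows "1 \<le> m * 2^(k-j)" "m * 2^(k-j) \<le> 2^k - 1"
proof -
  show "1 \<le> m * 2^(k-j)" using assms by simp
  have "m * 2^(k-j) \<le> (2^j - 1) * 2^(k-j)" using assms by simp
  also have "\<dots> = 2^k - 2^(k-j)" using assms(1)
    by (simp add: algebra_simps power_add[symmetric])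
  also have "\<dots> \<le> 2^k - 1" by (simp add: diff_le_mono2)
  finally show "m * 2^(k-j) \<le> 2^k - 1" .
qed

lemma real_q_le:
  assumes "(q::nat) \<le> 2^k - 1"
  shows "real q \<le> 2^k - 1"
proof -
  have "real q \<le> real (2^k - 1)" using assms by (simp only: of_nat_le_iff)
  thus ?thesis by (simp add: of_nat_diff)
qed


lemma pdef: "(2::nat)^\<alpha> = 2 * 2^(\<alpha>-1)"
  using alpha by (cases \<alpha>) auto

lemma DL_ge_k:
  assumes "0 \<le> x" "x + s \<le> 2^(n+1)" "1 \<le> q" "q \<le> 2^k - 1"
    "real q * (2*h) - h \<le> x" "x \<le> real q * (2*h) - s + h"
  shows "k \<le> DL c n s x"
proof -
  define p :: nat where "p = 2^(\<alpha>-1)"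
  have p2: "(2::nat)^\<alpha> = 2*p" unfolding p_def by (rule pdef)
  have p2r: "(2::real)^\<alpha> = 2 * real p"
  proof -
    have "real ((2::nat)^\<alpha>) = real (2*p)" using p2 by simp
    thus ?thesis by simp
  qed
  have ppos: "p > 0" unfolding p_def by simp
  define idx where "idx = (2*q - 1) * p"
  have K: "(1::nat) \<le> 2^k" by simp
  have "2*q - 1 \<le> 2 * 2^k - 2" using assms(3,4) K by linarith
  hence "idx \<le> p * (2 * 2^k - 2)" unfolding idx_def by (simp add: mult.commute)
  also have "\<dots> = 2^\<alpha> * 2^k - 2^\<alpha>" unfolding p2 by (simp add: algebra_simps diff_mult_distrib2)
  finally have ib: "idx \<le> 2^\<alpha> * 2^k - 2^\<alpha>" .
  have ri: "real idx = (2 * real q - 1) * real p" unfolding idx_def using assms(3) by (simp add: of_nat_diff)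
  have pos: "real idx * (2^(n+1-k) / 2^\<alpha>) = real q * (2*h) - h"
    unfolding ri Bk p2r using ppos by (simp add: field_simps)
  have pos2: "real idx * (2 * h / 2^\<alpha>) = real q * (2*h) - h"
    unfolding ri p2r using ppos by (simp add: field_simps)
  show ?thesis
  proof (rule DL_props(2)[OF s_pos assms(1,2) cdef, of k idx])
    show "k \<le> n+1" using kn by simp
    show "idx \<le> 2^\<alpha> * 2^k - 2^\<alpha>" by (rule ib)
    show "real idx * (2^(n+1-k) / 2^\<alpha>) \<le> x" unfolding pos using assms by linarith
    show "x + s \<le> real idx * (2^(n+1-k) / 2^\<alpha>) + 2^(n+1-k)" unfolding Bk pos2 using assms by linarith
  qed
qed

lemma DL_ge_km1:
  assumes "0 \<le> x" "x + s \<le> 2^(n+1)"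
  shows "k - 1 \<le> DL c n s x"
proof -
  define p :: nat where "p = 2^(\<alpha>-1)"
  have p2: "(2::nat)^\<alpha> = 2*p" unfolding p_def by (rule pdef)
  have p2r: "(2::real)^\<alpha> = 2 * real p"
  proof -
    have "real ((2::nat)^\<alpha>) = real (2*p)" using p2 by simp
    thus ?thesis by simp
  qed
  have ppos: "p > 0" unfolding p_def by simp
  have k1: "(2::nat)^k = 2 * 2^(k-1)" using k2 by (cases k) auto
  have B1: "(2::real)^(n+1-(k-1)) = 4*h" using Bj[of "k-1"] k2 by simp
  define q0 where "q0 = nat \<lfloor>x / (2*h)\<rfloor>"
  define q where "q = min q0 (2^k - 2)"
  have hp: "h > 0" by (rule h_pos)
  have q0le: "real q0 * (2*h) \<le> x"
  proof -
    have "real q0 \<le> x / (2*h)" unfolding q0_def using assms(1) hp by simp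
    thus ?thesis using hp by (simp add: field_simps)
  qed
  have q0gt: "x < (real q0 + 1) * (2*h)"
  proof -
    have "x / (2*h) < real q0 + 1" unfolding q0_def using assms(1) hp by linarith
    thus ?thesis using hp by (simp add: field_simps)
  qed
  have qle: "real q * (2*h) \<le> x"
    using q0le hp unfolding q_def by (smt (verit) min.cobounded1 mult_right_mono of_nat_le_iff)
  have qup: "x + s \<le> real q * (2*h) + 4*h"
  proof (cases "q0 \<le> 2^k - 2")
    case True
    hence "q = q0" unfolding q_def by simp
    thus ?thesis using q0gt s_le by (simp add: algebra_simps)
  next
    case False
    hence "q = 2^k - 2" unfolding q_def by simp
    moreover have "(2::nat) \<le> 2^k" using k1 by simp
    ultimately have "real q = 2^k - 2" by (simp add: of_nat_diff)
    hence "real q * (2*h) + 4*h = 2^(n+1)" unfolding NB by (simp only:) (simp add: algebra_simps)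
    thus ?thesis using assms(2) by simp
  qed
  define idx where "idx = q * p"
  have "idx \<le> p * (2^k - 2)" unfolding idx_def q_def by (simp add: mult.commute)
  also have "\<dots> = 2^\<alpha> * 2^(k-1) - 2^\<alpha>" unfolding p2 k1 by (simp add: algebra_simps diff_mult_distrib2)
  finally have ib: "idx \<le> 2^\<alpha> * 2^(k-1) - 2^\<alpha>" .
  have pos: "real idx * (2^(n+1-(k-1)) / 2^\<alpha>) = real q * (2*h)"
    unfolding idx_def B1 p2r using ppos by (simp add: field_simps)
  have pos2: "real idx * (4 * h / 2^\<alpha>) = real q * (2*h)"
    unfolding idx_def p2r using ppos by (simp add: field_simps)
  show ?thesis
  proof (rule DL_props(2)[OF s_pos assms(1,2) cdef, of "k-1" idx])
    show "k-1 \<le> n+1" using kn by simp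
    show "idx \<le> 2^\<alpha> * 2^(k-1) - 2^\<alpha>" by (rule ib)
    show "real idx * (2^(n+1-(k-1)) / 2^\<alpha>) \<le> x" unfolding pos using qle by linarith
    show "x + s \<le> real idx * (2^(n+1-(k-1)) / 2^\<alpha>) + 2^(n+1-(k-1))" unfolding B1 pos2 using qup by linarith
  qed
qed

end

lemma TL_lt:
  assumes "s > 0" "0 \<le> x" "x + s \<le> 2^(n+1)" "j \<le> n+1"
    "real m * 2^(n+1-j) - s < x" "x < real m * 2^(n+1-j)"
  shows "TL n s x < j"
proof (rule ccontr)
  let ?T = "TL n s x"
  assume "\<not> ?thesis"
  hence jT: "j \<le> ?T" by simp
  have Tn: "?T \<le> n+1" using TL_props(1)[OF assms(1-3)] .
  obtain m' where m': "real m' * 2^(n+1-?T) \<le> x" "x + s \<le> (real m'+1) * 2^(n+1-?T)"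
    using TL_props(2)[OF assms(1-3)] by blast
  have "n+1-j = (?T - j) + (n+1-?T)" using jT Tn by simp
  hence Bj: "(2::real)^(n+1-j) = 2^(?T-j) * 2^(n+1-?T)" by (simp add: power_add)
  define P where "P = m * 2^(?T-j)"
  have M: "real m * 2^(n+1-j) = real P * 2^(n+1-?T)" unfolding P_def Bj by simp
  have "real m' * 2^(n+1-?T) < real P * 2^(n+1-?T)" using m'(1) assms(6) M by linarith
  hence a: "m' < P" by (simp add: mult_less_cancel_right)
  have "real P * 2^(n+1-?T) < (real m'+1) * 2^(n+1-?T)" using m'(2) assms(5) M by linarith
  hence "real P < real m' + 1" by (simp add: mult_less_cancel_right)
  hence "P < m' + 1" by linarith
  thus False using a by simp
qed


lemma geo_sum:
  "(\<Sum>j\<in>{1..<k}. if t < j then (2::real)^(k-1-j) else 0) = (if t < k then 2^(k-1-t) - 1 else 0)"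
proof (induction k)
  case 0
  then show ?case by simp
next
  case (Suc k)
  show ?case
  proof (cases "k = 0")
    case True
    then show ?thesis by auto
  next
    case False
    have set: "{1..<Suc k} = insert k {1..<k}" using False by auto
    have "(\<Sum>j\<in>{1..<Suc k}. if t < j then (2::real)^(Suc k-1-j) else 0)
        = (if t < k then 1 else 0) + (\<Sum>j\<in>{1..<k}. if t < j then (2::real)^(k-j) else 0)"
    proof -
      have ee: "\<And>j. Suc k - 1 - j = k - j" by simp
      show ?thesis unfolding set ee by (subst sum.insert) auto
    qed
    also have "(\<Sum>j\<in>{1..<k}. if t < j then (2::real)^(k-j) else 0)
        = (\<Sum>j\<in>{1..<k}. 2 * (if t < j then (2::real)^(k-1-j) else 0))"
    proof (rule sum.cong)
      fix j assume "j \<in> {1..<k}"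
      hence "k - j = Suc (k-1-j)" by auto
      thus "(if t < j then (2::real)^(k-j) else 0) = 2 * (if t < j then (2::real)^(k-1-j) else 0)"
        by simp
    qed simp
    also have "\<dots> = 2 * (if t < k then 2^(k-1-t) - 1 else 0)"
      unfolding sum_distrib_left[symmetric] Suc.IH by simp
    finally have e: "(\<Sum>j\<in>{1..<Suc k}. if t < j then (2::real)^(Suc k-1-j) else 0)
        = (if t < k then 1 else 0) + 2 * (if t < k then 2^(k-1-t) - 1 else 0)" .
    show ?thesis
    proof (cases "t < k")
      case True
      hence "k - t = Suc (k-1-t)" by auto
      hence "(2::real)^(k-t) = 2 * 2^(k-1-t)" by simp
      then show ?thesis unfolding e using True by simp
    next
      case False
      then show ?thesis unfolding e by (cases "t = k") auto
    qed
  qed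
qed


context cfg
begin

definition Ii :: "nat \<Rightarrow> nat \<Rightarrow> real set" where
  "Ii j m = {real m * 2^(n+1-j) - s <..< real m * 2^(n+1-j)}"
definition Jj :: "nat \<Rightarrow> nat \<Rightarrow> real set" where
  "Jj j m = {real m * 2^(n+1-j) - h .. real m * 2^(n+1-j) - s + h}"
definition cc :: "nat \<Rightarrow> real \<Rightarrow> real" where
  "cc j x = (\<Sum>m\<in>{1..<2^j}. indicator (Ii j m) x)"
definition ee :: "nat \<Rightarrow> real \<Rightarrow> real" where
  "ee j x = (\<Sum>m\<in>{1..<2^j}. indicator (Jj j m) x)"
definition gg :: "real \<Rightarrow> real" where
  "gg x = indicator {0..2^(n+1)-s} x + (\<Sum>j\<in>{1..<k}. 2^(k-1-j) * (cc j x + ee j x)) + ee k x"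

lemma J_sub_I: "Jj j m \<subseteq> Ii j m"
  unfolding Jj_def Ii_def using s_gt by auto

lemma IJ_sub_A:
  assumes "j \<le> k" "m \<in> {1..<2^j}"
  shows "Ii j m \<subseteq> {0..2^(n+1)-s}" "Jj j m \<subseteq> {0..2^(n+1)-s}"
proof -
  define q where "q = m * 2^(k-j)"
  have q: "1 \<le> q" "q \<le> 2^k - 1" unfolding q_def using q_bounds[OF assms(1)] assms(2) by auto
  have rq: "1 \<le> real q" "real q \<le> 2^k - 1" using q(1) real_q_le[OF q(2)] by auto
  have M: "real m * 2^(n+1-j) = real q * (2*h)" unfolding q_def by (rule Mq[OF assms(1)])
  have hp: "h > 0" by (rule h_pos)
  have lo: "2*h \<le> real q * (2*h)" using rq hp by simp
  have "real q * (2*h) \<le> (2^k - 1) * (2*h)" using rq hp by (intro mult_right_mono) auto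
  hence hi: "real q * (2*h) \<le> 2^(n+1) - 2*h" unfolding NB by (simp add: algebra_simps)
  show "Ii j m \<subseteq> {0..2^(n+1)-s}"
  proof
    fix x assume "x \<in> Ii j m"
    hence "real q * (2*h) - s < x" "x < real q * (2*h)" unfolding Ii_def M by auto
    thus "x \<in> {0..2^(n+1)-s}" unfolding atLeastAtMost_iff using lo hi s_le by (intro conjI; linarith)
  qed
  show "Jj j m \<subseteq> {0..2^(n+1)-s}"
  proof
    fix x assume "x \<in> Jj j m"
    hence "real q * (2*h) - h \<le> x" "x \<le> real q * (2*h) - s + h" unfolding Jj_def M by auto
    thus "x \<in> {0..2^(n+1)-s}" unfolding atLeastAtMost_iff using lo hi s_le s_gt hp by (intro conjI; linarith)
  qed
qed

lemma I_disj:
  assumes "j < k" "m \<in> {1..<2^j}" "m' \<in> {1..<2^j}" "x \<in> Ii j m" "x \<in> Ii j m'"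
  shows "m = m'"
proof -
  have B: "(2::real)^(n+1-j) \<ge> 4*h"
  proof -
    have "k - j = Suc (k-j-1)" using assms(1) by simp
    hence "(2::real)^(k-j) \<ge> 2" by simp
    hence "(2::real)^(k-j) * (2*h) \<ge> 2 * (2*h)" using h_pos by (intro mult_right_mono) auto
    thus ?thesis using Bj[of j] assms(1) by simp
  qed
  have *: False if "a < b" "x \<in> Ii j a" "x \<in> Ii j b" for a b
  proof -
    have "real b * 2^(n+1-j) - s < real a * 2^(n+1-j)" using that(2,3) unfolding Ii_def by auto
    moreover have "real a + 1 \<le> real b" using that(1) by simp
    hence "(real a + 1) * 2^(n+1-j) \<le> real b * 2^(n+1-j)" by (intro mult_right_mono) auto
    ultimately show False using B s_le h_pos by (simp add: algebra_simps)
  qed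
  show ?thesis using *[of m m'] *[of m' m] assms(4,5) by (cases m m' rule: linorder_cases) auto
qed

lemma J_disj_k:
  assumes "m \<in> {1..<2^k}" "m' \<in> {1..<2^k}" "x \<in> Jj k m" "x \<in> Jj k m'"
  shows "m = m'"
proof -
  have *: False if "a < b" "x \<in> Jj k a" "x \<in> Jj k b" for a b
  proof -
    have "real b * (2*h) - h \<le> real a * (2*h) - s + h" using that(2,3) Bk unfolding Jj_def by auto
    moreover have "real a + 1 \<le> real b" using that(1) by simp
    hence "(real a + 1) * (2*h) \<le> real b * (2*h)" using h_pos by (intro mult_right_mono) auto
    ultimately show False using s_pos by (simp add: algebra_simps)
  qed
  show ?thesis using *[of m m'] *[of m' m] assms(3,4) by (cases m m' rule: linorder_cases) auto
qed

lemma cc_le1: "j < k \<Longrightarrow> cc j x \<le> 1"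
  unfolding cc_def by (rule sum_ind_le1) (auto intro: I_disj)

lemma ee_k_le1: "ee k x \<le> 1"
  unfolding ee_def by (rule sum_ind_le1) (auto intro: J_disj_k)

lemma ee_le_cc: "ee j x \<le> cc j x"
  unfolding ee_def cc_def
  by (intro sum_mono) (use J_sub_I in \<open>auto simp: indicator_def\<close>)

lemma cc_pos_TL:
  assumes "j \<le> k" "0 \<le> x" "x + s \<le> 2^(n+1)" "cc j x > 0"
  shows "TL n s x < j"
proof -
  obtain m where "m \<in> {1..<2^j}" "x \<in> Ii j m" using sum_ind_pos[OF assms(4)[unfolded cc_def]] by blast
  thus ?thesis using TL_lt[OF s_pos assms(2,3), of j m] assms(1) kn unfolding Ii_def by auto
qed

lemma ee_pos_DL:
  assumes "j \<le> k" "0 \<le> x" "x + s \<le> 2^(n+1)" "ee j x > 0"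
  shows "k \<le> DL c n s x"
proof -
  obtain m where m: "m \<in> {1..<2^j}" "x \<in> Jj j m" using sum_ind_pos[OF assms(4)[unfolded ee_def]] by blast
  define q where "q = m * 2^(k-j)"
  have q: "1 \<le> q" "q \<le> 2^k - 1" unfolding q_def using q_bounds[OF assms(1)] m(1) by auto
  have M: "real m * 2^(n+1-j) = real q * (2*h)" unfolding q_def by (rule Mq[OF assms(1)])
  show ?thesis using DL_ge_k[OF assms(2,3) q] m(2) unfolding Jj_def M by auto
qed

lemma ee_pos_TL:
  assumes "j \<le> k" "0 \<le> x" "x + s \<le> 2^(n+1)" "ee j x > 0"
  shows "TL n s x < j"
  using cc_pos_TL[OF assms(1-3)] ee_le_cc[of j x] assms(4) by linarith


lemma gg_out:
  assumes "x \<notin> {0..2^(n+1)-s}"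
  shows "gg x = 0"
proof -
  have c: "cc j x = 0" if "j \<le> k" for j
    unfolding cc_def using IJ_sub_A(1)[OF that] assms by (intro sum.neutral) (force simp: indicator_def)
  have e: "ee j x = 0" if "j \<le> k" for j
    unfolding ee_def using IJ_sub_A(2)[OF that] assms by (intro sum.neutral) (force simp: indicator_def)
  show ?thesis unfolding gg_def using assms c e by simp
qed

lemma gg_in:
  assumes "0 \<le> x" "x + s \<le> 2^(n+1)"
  shows "gg x \<le> comp_ratio c n (query x s)"
proof -
  define t where "t = TL n s x"
  define D where "D = DL c n s x"
  define \<delta> :: real where "\<delta> = (if k \<le> D then 1 else 0)"
  have tD: "t \<le> D" unfolding t_def D_def by (rule TL_le_DL[OF s_pos assms cdef])
  have Dk: "k - 1 \<le> D" unfolding D_def by (rule DL_ge_km1[OF assms])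
  have R: "comp_ratio c n (query x s) = 2^(D - t)" unfolding t_def D_def by (rule ratio_pow[OF s_pos assms cdef])
  have A: "indicator {0..2^(n+1)-s} x = (1::real)" using assms by (simp add: indicator_def)
  have cj: "cc j x + ee j x \<le> (if t < j then 1 + \<delta> else 0)" if j: "j \<in> {1..<k}" for j
  proof (cases "cc j x > 0")
    case True
    have "t < j" unfolding t_def using cc_pos_TL[OF _ assms True] j by simp
    moreover have "cc j x \<le> 1" using cc_le1 j by simp
    moreover have "ee j x \<le> \<delta>"
    proof (cases "ee j x > 0")
      case True
      hence "k \<le> D" unfolding D_def using ee_pos_DL[OF _ assms True] j by simp
      thus ?thesis unfolding \<delta>_def using ee_le_cc[of j x] \<open>cc j x \<le> 1\<close> by simp
    next
      case False
      thus ?thesis unfolding \<delta>_def by simp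
    qed
    ultimately show ?thesis by simp
  next
    case False
    hence "cc j x = 0" using sum_ind_nonneg[of "Ii j" x "{1..<2^j}"] unfolding cc_def by simp
    moreover have "ee j x = 0" using ee_le_cc[of j x] sum_ind_nonneg[of "Jj j" x "{1..<2^j}"] calculation
      unfolding ee_def by simp
    ultimately show ?thesis unfolding \<delta>_def by simp
  qed
  have ek: "ee k x \<le> (if t < k then \<delta> else 0)"
  proof (cases "ee k x > 0")
    case True
    have "t < k" unfolding t_def using ee_pos_TL[OF _ assms True] by simp
    moreover have "k \<le> D" unfolding D_def using ee_pos_DL[OF _ assms True] by simp
    ultimately show ?thesis unfolding \<delta>_def using ee_k_le1[of x] by simp
  next
    case False
    thus ?thesis unfolding \<delta>_def by simp
  qed
  have "gg x \<le> 1 + (\<Sum>j\<in>{1..<k}. 2^(k-1-j) * (if t < j then 1 + \<delta> else 0)) + (if t < k then \<delta> else 0)"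
    unfolding gg_def A using cj ek
    by (intro add_mono order_refl sum_mono mult_left_mono) auto
  also have "(\<Sum>j\<in>{1..<k}. 2^(k-1-j) * (if t < j then 1 + \<delta> else 0))
      = (1 + \<delta>) * (\<Sum>j\<in>{1..<k}. if t < j then (2::real)^(k-1-j) else 0)"
    unfolding sum_distrib_left by (intro sum.cong) auto
  also have "\<dots> = (1 + \<delta>) * (if t < k then 2^(k-1-t) - 1 else 0)" unfolding geo_sum ..
  finally have g: "gg x \<le> 1 + (1 + \<delta>) * (if t < k then 2^(k-1-t) - 1 else 0) + (if t < k then \<delta> else 0)" .
  show ?thesis
  proof (cases "t < k")
    case False
    hence "gg x \<le> 1" using g by simp
    also have "1 \<le> comp_ratio c n (query x s)" unfolding R by simp
    finally show ?thesis .
  next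
    case True
    hence g2: "gg x \<le> (1 + \<delta>) * 2^(k-1-t)" using g by (simp add: algebra_simps)
    show ?thesis
    proof (cases "k \<le> D")
      case True
      have "(1 + \<delta>) * 2^(k-1-t) = (2::real)^(Suc (k-1-t))" unfolding \<delta>_def using True by simp
      also have "\<dots> \<le> 2^(D-t)" using True \<open>t < k\<close> by (intro power_increasing) auto
      finally show ?thesis using g2 R by simp
    next
      case False
      have "(1 + \<delta>) * 2^(k-1-t) = (2::real)^(k-1-t)" unfolding \<delta>_def using False by simp
      also have "\<dots> \<le> 2^(D-t)" using Dk by (intro power_increasing) auto
      finally show ?thesis using g2 R by simp
    qed
  qed
qed

lemma gg_le: "gg x \<le> indicator {0..2^(n+1)-s} x * comp_ratio c n (query x s)"
proof (cases "x \<in> {0..2^(n+1)-s}")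
  case True
  thus ?thesis using gg_in[of x] by auto
next
  case False
  thus ?thesis using gg_out by simp
qed

end


lemma TL_meas':
  assumes "s > 0"
  shows "TL n s \<in> measurable lborel (count_space UNIV)"
proof -
  have e: "TL n s = (\<lambda>x. Max {l. l \<le> n+1 \<and> (\<exists>m\<in>{..<(2::nat)^l}. real m * 2^(n+1-l) \<le> x \<and> x + s \<le> (real m+1) * 2^(n+1-l))})"
    unfolding TL_def src_level_def tree_nodes_def tree_sub[OF assms] by (simp add: lessThan_def)
  show ?thesis unfolding e by measurable
qed

lemma DL_meas:
  assumes "s > 0" "c = 2^\<alpha> + 1"
  shows "DL c n s \<in> measurable lborel (count_space UNIV)"
proof -
  have e: "DL c n s = (\<lambda>x. Max {l. l \<le> n+1 \<and> (\<exists>m\<in>{..(2::nat)^\<alpha> * 2^l - 2^\<alpha>}. real m * (2^(n+1-l) / 2^\<alpha>) \<le> x \<and> x + s \<le> real m * (2^(n+1-l) / 2^\<alpha>) + 2^(n+1-l))})"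
    unfolding DL_def src_level_def dag_nodes_def dag_sub[OF assms] using assms(2) by (simp add: atMost_def)
  show ?thesis unfolding e by measurable
qed


lemma R_integrable:
  assumes "s > 0" "c = 2^\<alpha> + 1"
  shows "integrable lborel (\<lambda>x. indicator {0..2^(n+1)-s} x * comp_ratio c n (query x s))"
proof -
  let ?A = "{0..(2::real)^(n+1)-s}"
  define F where "F x = indicator ?A x * ((2::real)^(n+1-TL n s x) / 2^(n+1-DL c n s x))" for x
  have eq: "(\<lambda>x. indicator ?A x * comp_ratio c n (query x s)) = F"
  proof
    fix x
    show "indicator ?A x * comp_ratio c n (query x s) = F x"
    proof (cases "x \<in> ?A")
      case True
      hence "0 \<le> x" "x + s \<le> 2^(n+1)" by auto
      thus ?thesis unfolding F_def using ratio_eq[OF assms(1) _ _ assms(2)] by simp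
    next
      case False
      thus ?thesis unfolding F_def by simp
    qed
  qed
  have m1: "(\<lambda>x. (2::real)^(n+1-TL n s x) / 2^(n+1-DL c n s x)) \<in> borel_measurable lborel"
  proof -
    have a: "(\<lambda>x. (\<lambda>i x. (2::real)^(n+1-TL n s x) / 2^(n+1-i)) (DL c n s x) x) \<in> borel_measurable lborel"
    proof (rule measurable_compose_countable[where f="\<lambda>i x. (2::real)^(n+1-TL n s x) / 2^(n+1-i)"])
      fix i :: nat
      show "(\<lambda>x. (2::real)^(n+1-TL n s x) / 2^(n+1-i)) \<in> borel_measurable lborel"
        by (rule measurable_compose_countable[where f="\<lambda>j x. (2::real)^(n+1-j) / 2^(n+1-i)"])
           (use TL_meas'[OF assms(1)] in auto)
    qed (rule DL_meas[OF assms])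
    thus ?thesis by simp
  qed
  have mF: "F \<in> borel_measurable lborel" unfolding F_def using m1 by measurable
  have "integrable lborel F"
  proof (rule integrableI_bounded_set[where A="?A" and B="2^(n+1)"])
    show "?A \<in> sets lborel" by simp
    show "F \<in> borel_measurable lborel" by (rule mF)
    show "emeasure lborel ?A < \<infinity>" by (simp add: emeasure_lborel_Icc_eq)
    show "AE x in lborel. x \<in> ?A \<longrightarrow> norm (F x) \<le> 2^(n+1)"
    proof (rule AE_I2, rule impI)
      fix x assume "x \<in> ?A"
      have "(2::real)^(n+1-TL n s x) / 2^(n+1-DL c n s x) \<le> 2^(n+1-TL n s x)"
        by (simp add: divide_le_eq)
      also have "\<dots> \<le> 2^(n+1)" by (intro power_increasing) auto
      finally show "norm (F x) \<le> 2^(n+1)" unfolding F_def using \<open>x \<in> ?A\<close> by simp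
    qed
    show "AE x in lborel. x \<notin> ?A \<longrightarrow> F x = 0" unfolding F_def by simp
  qed
  thus ?thesis unfolding eq .
qed

lemma lint_lower:
  fixes g R :: "real \<Rightarrow> real"
  assumes "integrable lborel g" "integrable lborel (\<lambda>x. indicator A x * R x)"
    "\<And>x. g x \<le> indicator A x * R x"
  shows "integral\<^sup>L lborel g \<le> (LINT x:A|lborel. R x)"
  unfolding set_lebesgue_integral_def using assms by (simp add: integral_mono)

lemma lint_ge_len:
  assumes "1 < s" "s < 2^(n+1)" "c = 2^\<alpha> + 1"
  shows "2^(n+1) - s \<le> (LINT x:{0..2^(n+1)-s}|lborel. comp_ratio c n (query x s))"
proof -
  have sp: "s > 0" using assms by simp
  have "integral\<^sup>L lborel (indicator {0..(2::real)^(n+1)-s}) \<le> (LINT x:{0..2^(n+1)-s}|lborel. comp_ratio c n (query x s))"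
  proof (rule lint_lower[OF _ R_integrable[OF sp assms(3)]])
    show "integrable lborel (indicator {0..(2::real)^(n+1)-s} :: real \<Rightarrow> real)"
      by (intro integrable_real_indicator) (auto simp: emeasure_lborel_Icc_eq)
    fix x
    show "indicator {0..(2::real)^(n+1)-s} x \<le> indicator {0..2^(n+1)-s} x * comp_ratio c n (query x s)"
    proof (cases "x \<in> {0..(2::real)^(n+1)-s}")
      case True
      hence "0 \<le> x" "x + s \<le> 2^(n+1)" by auto
      thus ?thesis using ratio_ge1[OF sp _ _ assms(3)] True by simp
    qed simp
  qed
  thus ?thesis using assms by simp
qed


context cfg
begin

lemma int_I: "integrable lborel (indicator (Ii j m) :: real \<Rightarrow> real)" "integral\<^sup>L lborel (indicator (Ii j m) :: real \<Rightarrow> real) = s"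
  unfolding Ii_def using s_pos by (auto intro!: integrable_real_indicator)

lemma int_J: "integrable lborel (indicator (Jj j m) :: real \<Rightarrow> real)" "integral\<^sup>L lborel (indicator (Jj j m) :: real \<Rightarrow> real) = 2*h - s"
  unfolding Jj_def using s_le by (auto intro!: integrable_real_indicator simp: emeasure_lborel_Icc_eq)

lemma card_r: "real (card {1..<(2::nat)^j}) = 2^j - 1"
proof -
  have "(1::nat) \<le> 2^j" by simp
  thus ?thesis by (simp add: of_nat_diff)
qed

lemma int_cc: "integrable lborel (cc j)" "integral\<^sup>L lborel (cc j) = (2^j - 1) * s"
proof -
  have e: "cc j = (\<lambda>x. \<Sum>m\<in>{1..<2^j}. indicator (Ii j m) x)" unfolding cc_def by simp
  show "integrable lborel (cc j)" unfolding e by (rule Bochner_Integration.integrable_sum) (rule int_I(1))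
  have "integral\<^sup>L lborel (cc j) = (\<Sum>m\<in>{1..<2^j}. integral\<^sup>L lborel (indicator (Ii j m) :: real \<Rightarrow> real))"
    unfolding e by (rule Bochner_Integration.integral_sum) (rule int_I(1))
  also have "\<dots> = (2^j - 1) * s" using int_I(2) card_r[of j] by simp
  finally show "integral\<^sup>L lborel (cc j) = (2^j - 1) * s" .
qed

lemma int_ee: "integrable lborel (ee j)" "integral\<^sup>L lborel (ee j) = (2^j - 1) * (2*h - s)"
proof -
  have e: "ee j = (\<lambda>x. \<Sum>m\<in>{1..<2^j}. indicator (Jj j m) x)" unfolding ee_def by simp
  show "integrable lborel (ee j)" unfolding e by (rule Bochner_Integration.integrable_sum) (rule int_J(1))
  have "integral\<^sup>L lborel (ee j) = (\<Sum>m\<in>{1..<2^j}. integral\<^sup>L lborel (indicator (Jj j m) :: real \<Rightarrow> real))"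
    unfolding e by (rule Bochner_Integration.integral_sum) (rule int_J(1))
  also have "\<dots> = (2^j - 1) * (2*h - s)" using int_J(2) card_r[of j] by simp
  finally show "integral\<^sup>L lborel (ee j) = (2^j - 1) * (2*h - s)" .
qed

lemma int_gg: "integrable lborel gg"
  "integral\<^sup>L lborel gg = (2^(n+1) - s) + (\<Sum>j\<in>{1..<k}. 2^(k-1-j) * ((2^j - 1) * s + (2^j - 1) * (2*h - s)))
      + (2^k - 1) * (2*h - s)"
proof -
  let ?A = "{0..(2::real)^(n+1)-s}"
  have iA: "integrable lborel (indicator ?A :: real \<Rightarrow> real)"
    by (intro integrable_real_indicator) (auto simp: emeasure_lborel_Icc_eq)
  have NA: "(2::real)^(n+1) - s \<ge> 0"
  proof -
    have "(2::real)^k \<ge> 1" by simp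
    hence "(2::real)^k * (2*h) \<ge> 1 * (2*h)" using h_pos by (intro mult_right_mono) auto
    thus ?thesis using NB s_le by simp
  qed
  have iS: "integrable lborel (\<lambda>x. \<Sum>j\<in>{1..<k}. 2^(k-1-j) * (cc j x + ee j x))"
    by (rule Bochner_Integration.integrable_sum, rule Bochner_Integration.integrable_mult_right, rule Bochner_Integration.integrable_add) (auto intro: int_cc int_ee)
  have e: "gg = (\<lambda>x. (indicator ?A x + (\<Sum>j\<in>{1..<k}. 2^(k-1-j) * (cc j x + ee j x))) + ee k x)"
    unfolding gg_def by simp
  show "integrable lborel gg" unfolding e
    by (intro Bochner_Integration.integrable_add iA iS int_ee)
  have "integral\<^sup>L lborel gg = integral\<^sup>L lborel (indicator ?A :: real \<Rightarrow> real)
      + integral\<^sup>L lborel (\<lambda>x. \<Sum>j\<in>{1..<k}. 2^(k-1-j) * (cc j x + ee j x)) + integral\<^sup>L lborel (ee k)"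
  proof -
    have i1: "integrable lborel (\<lambda>x. indicator ?A x + (\<Sum>j\<in>{1..<k}. 2^(k-1-j) * (cc j x + ee j x)))"
      by (intro Bochner_Integration.integrable_add iA iS)
    have "integral\<^sup>L lborel gg = integral\<^sup>L lborel (\<lambda>x. indicator ?A x + (\<Sum>j\<in>{1..<k}. 2^(k-1-j) * (cc j x + ee j x))) + integral\<^sup>L lborel (ee k)"
      unfolding e by (rule Bochner_Integration.integral_add[OF i1 int_ee(1)])
    also have "integral\<^sup>L lborel (\<lambda>x. indicator ?A x + (\<Sum>j\<in>{1..<k}. 2^(k-1-j) * (cc j x + ee j x)))
       = integral\<^sup>L lborel (indicator ?A :: real \<Rightarrow> real) + integral\<^sup>L lborel (\<lambda>x. \<Sum>j\<in>{1..<k}. 2^(k-1-j) * (cc j x + ee j x))"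
      by (rule Bochner_Integration.integral_add[OF iA iS])
    finally show ?thesis .
  qed
  also have "integral\<^sup>L lborel (\<lambda>x. \<Sum>j\<in>{1..<k}. 2^(k-1-j) * (cc j x + ee j x))
      = (\<Sum>j\<in>{1..<k}. 2^(k-1-j) * ((2^j - 1) * s + (2^j - 1) * (2*h - s)))"
    by (subst Bochner_Integration.integral_sum) (auto intro!: Bochner_Integration.integrable_mult_right Bochner_Integration.integrable_add int_cc int_ee
        simp: Bochner_Integration.integral_add[OF int_cc(1) int_ee(1)] int_cc(2) int_ee(2))
  also have "integral\<^sup>L lborel (indicator ?A :: real \<Rightarrow> real) = 2^(n+1) - s"
    using NA by simp
  finally show "integral\<^sup>L lborel gg = (2^(n+1) - s) + (\<Sum>j\<in>{1..<k}. 2^(k-1-j) * ((2^j - 1) * s + (2^j - 1) * (2*h - s)))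
      + (2^k - 1) * (2*h - s)" using int_ee(2)[of k] by simp
qed

end


context cfg
begin

lemma sum_eval:
  "(\<Sum>j\<in>{1..<k}. 2^(k-1-j) * ((2^j - 1) * s + (2^j - 1) * (2*h - s)))
     = 2*h * ((real k - 1) * 2^(k-1) - (2^(k-1) - 1))"
proof -
  have "(\<Sum>j\<in>{1..<k}. 2^(k-1-j) * ((2^j - 1) * s + (2^j - 1) * (2*h - s)))
      = (\<Sum>j\<in>{1..<k}. 2*h * (2^(k-1) - (2::real)^(k-1-j)))"
  proof (rule sum.cong)
    fix j assume "j \<in> {1..<k}"
    hence "k-1 = (k-1-j) + j" by auto
    hence "(2::real)^(k-1) = 2^(k-1-j) * 2^j" by (metis power_add)
    thus "2^(k-1-j) * ((2^j - 1) * s + (2^j - 1) * (2*h - s)) = 2*h * (2^(k-1) - (2::real)^(k-1-j))"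
      by (simp add: algebra_simps)
  qed simp
  also have "\<dots> = 2*h * (\<Sum>j\<in>{1..<k}. (2^(k-1) - (2::real)^(k-1-j)))" by (simp add: sum_distrib_left)
  also have "(\<Sum>j\<in>{1..<k}. (2^(k-1) - (2::real)^(k-1-j))) = real (k-1) * 2^(k-1) - (\<Sum>j\<in>{1..<k}. (2::real)^(k-1-j))"
    by (simp add: sum_subtractf)
  also have "(\<Sum>j\<in>{1..<k}. (2::real)^(k-1-j)) = (\<Sum>j\<in>{1..<k}. if 0 < j then (2::real)^(k-1-j) else 0)"
    by (intro sum.cong) auto
  also have "\<dots> = 2^(k-1) - 1" unfolding geo_sum using k2 by simp
  also have "real (k-1) = real k - 1" using k2 by simp
  finally show ?thesis .
qed

lemma int_gg_bound: "real k / 2 * (2^(n+1) - s) \<le> integral\<^sup>L lborel gg"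
proof -
  define P :: real where "P = 2^(k-1)"
  have P2: "(2::real)^k = 2 * P" unfolding P_def using k2 by (cases k) auto
  have N: "(2::real)^(n+1) = 4 * P * h" unfolding NB P2 by simp
  have Ppos: "P > 0" unfolding P_def by simp
  have ig: "integral\<^sup>L lborel gg = 4*P*h - s + 2*h * ((real k - 1) * P - (P - 1)) + (2*P - 1) * (2*h - s)"
    unfolding int_gg(2) sum_eval N P2 P_def[symmetric] ..
  have "integral\<^sup>L lborel gg - real k / 2 * (2^(n+1) - s) = 2*P*(2*h - s) + real k * s / 2"
    unfolding ig N by (simp add: algebra_simps)
  moreover have "2*P*(2*h - s) \<ge> 0" using Ppos s_le by simp
  moreover have "real k * s / 2 \<ge> 0" using s_pos by simp
  ultimately show ?thesis by linarith
qed

lemma main_k: "real k / 2 * (2^(n+1) - s) \<le> (LINT x:{0..2^(n+1)-s}|lborel. comp_ratio c n (query x s))"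
  using int_gg_bound lint_lower[OF int_gg(1) R_integrable[OF s_pos cdef] gg_le] by linarith

end


lemma part1:
  assumes "c = 2^\<alpha> + 1"
  shows "exp_ratio c n 1 = 1"
proof -
  have "(\<Sum>x\<in>dataset n. comp_ratio c n (query (real x) 1)) = (\<Sum>x\<in>dataset n. 1)"
    by (intro sum.cong) (auto simp: dataset_def intro: ratio_unit[OF _ assms])
  also have "\<dots> = 2^(n+1)" by (simp add: dataset_def)
  finally show ?thesis unfolding exp_ratio_def Let_def by simp
qed

lemma part2:
  assumes "\<alpha> \<ge> 1" "c = 2^\<alpha> + 1" "1 < s" "s \<le> 2^(n+1)"
  shows "exp_ratio c n s \<ge> max 1 ((1/2) * real_of_int \<lfloor>log 2 (2^(n+1) / s)\<rfloor>)"
proof (cases "s = 2^(n+1)")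
  case True
  have "exp_ratio c n s = comp_ratio c n (query 0 s)"
    unfolding exp_ratio_def Let_def using True assms(3) by simp
  moreover have "comp_ratio c n (query 0 s) \<ge> 1"
    using ratio_ge1[of s 0 n c \<alpha>] assms True by simp
  moreover have "\<lfloor>log 2 (2^(n+1) / s)\<rfloor> = 0" using True assms(3) by simp
  ultimately show ?thesis by simp
next
  case False
  hence sN: "s < 2^(n+1)" using assms(4) by simp
  define L where "L = (LINT x:{0..2^(n+1)-s}|lborel. comp_ratio c n (query x s))"
  have E: "exp_ratio c n s = L / (2^(n+1) - s)"
    unfolding exp_ratio_def Let_def L_def using False assms(3) by simp
  have pos: "(2::real)^(n+1) - s > 0" using sN by simp
  have E1: "exp_ratio c n s \<ge> 1"
    unfolding E using lint_ge_len[OF assms(3) sN assms(2)] pos L_def by (simp add: le_divide_eq)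
  define K where "K = \<lfloor>log 2 (2^(n+1) / s)\<rfloor>"
  have q1: "(2::real)^(n+1) / s > 1" using sN assms(3) by simp
  have Kge: "K \<ge> 0" unfolding K_def using q1 by simp
  define k where "k = nat K"
  have Kk: "K = int k" unfolding k_def using Kge by simp
  show ?thesis
  proof (cases "k \<ge> 2")
    case False
    hence "(1/2) * real_of_int K \<le> 1" using Kk by simp
    thus ?thesis using E1 unfolding K_def by simp
  next
    case True
    have "2 powr (real_of_int K) \<le> 2^(n+1) / s \<and> 2^(n+1) / s < 2 powr (real_of_int K + 1)"
      using floor_log_eq_powr_iff[of "2^(n+1)/s" 2 K] q1 unfolding K_def by simp
    moreover have "(2::real) powr (real_of_int K) = 2^k" unfolding Kk by (simp add: powr_realpow)
    moreover have "real_of_int K + 1 = real (k+1)" unfolding Kk by simp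
    hence "(2::real) powr (real_of_int K + 1) = 2^(k+1)" by (simp only: powr_realpow)
    ultimately have b: "2^k \<le> 2^(n+1) / s" "2^(n+1) / s < 2^(k+1)" by simp_all
    have b1: "2^k * s \<le> 2^(n+1)" using b(1) assms(3) by (simp add: le_divide_eq)
    have b2: "2^(n+1) < 2^(k+1) * s" using b(2) assms(3) by (simp add: divide_less_eq)
    have "(2::real)^k < 2^k * s" using assms(3) by simp
    hence "(2::real)^k < 2^(n+1)" using b1 by linarith
    hence "k < n+1" by (rule power_less_imp_less_exp[rotated]) simp
    hence kn: "k \<le> n" by simp
    define h :: real where "h = 2^(n-k)"
    have Nh: "(2::real)^(n+1) = 2^(k+1) * h" unfolding h_def using kn
      by (simp add: power_add[symmetric])
    have hs: "h < s" using b2 unfolding Nh by simp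
    have sh: "s \<le> 2*h" using b1 unfolding Nh by simp
    interpret cfg n \<alpha> c k s h
      using assms(1,2) True kn h_def hs sh by unfold_locales auto
    have "real k / 2 * (2^(n+1) - s) \<le> L" unfolding L_def by (rule main_k)
    hence "real k / 2 \<le> exp_ratio c n s" unfolding E using pos by (simp add: le_divide_eq)
    thus ?thesis using E1 unfolding K_def[symmetric] Kk by simp
  qed
qed

theorem theorem3:
  fixes n \<alpha> c :: nat
  assumes "\<alpha> \<ge> 1" and "c = 2^\<alpha> + 1"
  shows "exp_ratio c n 1 = 1 \<and>
         (\<forall>s::real. 1 < s \<and> s \<le> 2^(n+1) \<longrightarrow>
           exp_ratio c n s \<ge> max 1 ((1/2) * real_of_int \<lfloor>log 2 (2^(n+1) / s)\<rfloor>))"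
  using part1[OF assms(2)] part2[OF assms] by blast

end
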